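(* Let $m\ge2$, $n\ge1$, and let $\mathcal{A}\in\mathbb{R}_+^{[m,n]}$ be weakly irreducible. Let $k$ be any fixed positive integer, and let $\mathcal{S}_k$ be the set of tensors $\mathcal{B}\in\mathbb{R}_+^{[k,n]}$ with $r_i(\mathcal{B})\neq0$ for all $i\in[n]$. Then the maximum and minimum below are attained and \[\max_{\mathcal{B}\in\mathcal{S}_k}\ \min_{i\in[n]}\frac{r_i(\mathcal{A}\mathcal{B})}{(r_i(\mathcal{B}))^{m-1}}=\rho(\mathcal{A})=\min_{\mathcal{B}\in\mathcal{S}_k}\ \max_{i\in[n]}\frac{r_i(\mathcal{A}\mathcal{B})}{(r_i(\mathcal{B}))^{m-1}}.\]
   Context: $[n]=\{1,\ldots,n\}$. $\mathbb{R}_+^{[m,n]}$ denotes the set of order $m$, dimension $n$ tensors $\mathcal{A}=(a_{i_1\cdots i_m})$, $i_j\in[n]$, with nonnegative real entries (for order $1$: nonnegative vectors). A tensor $\mathcal{A}\in\mathbb{R}_+^{[m,n]}$ is called weakly irreducible (as defined in this paper) if for every nonempty proper subset $I\subset[n]$ there exist $i_1,\ldots,i_m$ with $a_{i_1i_2\cdots i_m}>0$, $i_1\in I$ and $i_j\in[n]\setminus I$ for all $j\in\{2,\ldots,m\}$. For a tensor $\mathcal{T}=(t_{i_1\cdots i_p})$ of order $p$ and dimension $n$, $r_i(\mathcal{T})=\sum_{i_2,\ldots,i_p=1}^n|t_{ii_2\cdots i_p}|$ (for $p=1$, $r_i(\mathcal{T})=|t_i|$). General product: for $\mathcal{A}$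 of order $m\ge2$ and $\mathcal{B}$ of order $k\ge1$, $\mathcal{A}\mathcal{B}=(c_{i\alpha_1\cdots\alpha_{m-1}})$ is the order $(m-1)(k-1)+1$, dimension $n$ tensor with $c_{i\alpha_1\cdots\alpha_{m-1}}=\sum_{i_2,\ldots,i_m=1}^n a_{ii_2\cdots i_m}b_{i_2\alpha_1}\cdots b_{i_m\alpha_{m-1}}$, $i\in[n]$, $\alpha_j\in[n]^{k-1}$ (where $b_{j\alpha}$ with $\alpha=(j_2,\ldots,j_k)$ means $b_{jj_2\cdots j_k}$). Eigenvalues: $\lambda\in\mathbb{C}$ is an eigenvalue of $\mathcal{A}$ if there is a nonzero $x\in\mathbb{C}^n$ with $\sum_{i_2,\ldots,i_m=1}^n a_{ii_2\cdots i_m}x_{i_2}\cdots x_{i_m}=\lambda x_i^{m-1}$ for all $i\in[n]$; $\rho(\mathcal{A})$ is the maximum modulus of the eigenvalues of $\mathcal{A}$. *)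

theory Defs
  imports Complex_Main
begin

text \<open>Tensors of order p and dimension n are modelled as functions from index lists
  to reals; indices are 0-based, i.e. [n] is rendered as {..<n}. Only entries at index
  lists of length p with all entries < n are relevant.\<close>

definition tensor_idx :: "nat \<Rightarrow> nat \<Rightarrow> nat list set" where
  "tensor_idx p n = {xs. length xs = p \<and> set xs \<subseteq> {..<n}}"

definition nonneg_tensor :: "nat \<Rightarrow> nat \<Rightarrow> (nat list \<Rightarrow> real) \<Rightarrow> bool" where
  "nonneg_tensor p n T \<longleftrightarrow> (\<forall>xs\<in>tensor_idx p n. 0 \<le> T xs)"

definition row_sum :: "nat \<Rightarrow> nat \<Rightarrow> (nat list \<Rightarrow> real) \<Rightarrow> nat \<Rightarrow> real" where
  "row_sum p n T i = (\<Sum>\<alpha>\<in>tensor_idx (p - 1) n. \<bar>T (i # \<alpha>)\<bar>)"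

text \<open>General product AB of A (order m) and B (order k): an entry
  c_{i \<alpha>_1 ... \<alpha>_{m-1}} is stored at the index list i # \<alpha>_1 @ ... @ \<alpha>_{m-1},
  where each \<alpha>_j has length k-1.\<close>
definition tensor_prod :: "nat \<Rightarrow> nat \<Rightarrow> nat \<Rightarrow> (nat list \<Rightarrow> real) \<Rightarrow> (nat list \<Rightarrow> real)
    \<Rightarrow> nat list \<Rightarrow> real" where
  "tensor_prod m k n A B xs =
     (\<Sum>is\<in>tensor_idx (m - 1) n.
        A (hd xs # is) *
        (\<Prod>j<m - 1. B (is ! j # take (k - 1) (drop (j * (k - 1)) (tl xs)))))"

definition tensor_eigenvalue :: "nat \<Rightarrow> nat \<Rightarrow> (nat list \<Rightarrow> real) \<Rightarrow> complex \<Rightarrow> bool" where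
  "tensor_eigenvalue m n A lam \<longleftrightarrow>
     (\<exists>x :: nat \<Rightarrow> complex. (\<exists>i<n. x i \<noteq> 0) \<and>
        (\<forall>i<n. (\<Sum>is\<in>tensor_idx (m - 1) n. complex_of_real (A (i # is)) * (\<Prod>j<m - 1. x (is ! j)))
               = lam * x i ^ (m - 1)))"

definition spectral_radius :: "nat \<Rightarrow> nat \<Rightarrow> (nat list \<Rightarrow> real) \<Rightarrow> real" where
  "spectral_radius m n A = Sup {cmod lam | lam. tensor_eigenvalue m n A lam}"

definition weakly_irreducible :: "nat \<Rightarrow> nat \<Rightarrow> (nat list \<Rightarrow> real) \<Rightarrow> bool" where
  "weakly_irreducible m n A \<longleftrightarrow>
     (\<forall>I. I \<noteq> {} \<and> I \<subset> {..<n} \<longrightarrow>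
        (\<exists>i\<in>I. \<exists>is\<in>tensor_idx (m - 1) n. set is \<subseteq> {..<n} - I \<and> 0 < A (i # is)))"

definition S_set :: "nat \<Rightarrow> nat \<Rightarrow> (nat list \<Rightarrow> real) set" where
  "S_set k n = {B. nonneg_tensor k n B \<and> (\<forall>i<n. row_sum k n B i \<noteq> 0)}"

definition ratio :: "nat \<Rightarrow> nat \<Rightarrow> nat \<Rightarrow> (nat list \<Rightarrow> real) \<Rightarrow> (nat list \<Rightarrow> real) \<Rightarrow> nat \<Rightarrow> real" where
  "ratio m k n A B i =
     row_sum ((m - 1) * (k - 1) + 1) n (tensor_prod m k n A B) i / (row_sum k n B i) ^ (m - 1)"

end

theory Submission
  imports Defs "HOL-Analysis.Analysis"
begin

lemma finite_tensor_idx[simp]: "finite (tensor_idx p n)"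
proof -
  have "tensor_idx p n = {xs. set xs \<subseteq> {..<n} \<and> length xs = p}"
    by (auto simp: tensor_idx_def)
  then show ?thesis using finite_lists_length_eq[of "{..<n}" p] by simp
qed

lemma tensor_idx_nth: "is \<in> tensor_idx p n \<Longrightarrow> j < p \<Longrightarrow> is ! j < n"
proof -
  assume a: "is \<in> tensor_idx p n" "j < p"
  then have "is ! j \<in> set is" by (simp add: tensor_idx_def)
  then show "is ! j < n" using a(1) by (auto simp: tensor_idx_def)
qed

lemma tensor_idx_Cons: "i < n \<Longrightarrow> is \<in> tensor_idx p n \<Longrightarrow> i # is \<in> tensor_idx (Suc p) n"
  by (auto simp: tensor_idx_def)

lemma tensor_idx_0[simp]: "tensor_idx 0 n = {[]}"
  by (auto simp: tensor_idx_def)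

lemma tensor_idx_add:
  "tensor_idx (q + p) n = (\<lambda>(a,b). a @ b) ` (tensor_idx q n \<times> tensor_idx p n)"
proof (intro equalityI subsetI)
  fix xs assume "xs \<in> tensor_idx (q + p) n"
  then have "take q xs \<in> tensor_idx q n" "drop q xs \<in> tensor_idx p n"
    by (auto simp: tensor_idx_def dest: in_set_takeD in_set_dropD)
  moreover have "xs = take q xs @ drop q xs" by simp
  ultimately show "xs \<in> (\<lambda>(a,b). a @ b) ` (tensor_idx q n \<times> tensor_idx p n)"
    by (metis (no_types, lifting) SigmaI case_prod_conv image_eqI)
qed (auto simp: tensor_idx_def)

lemma inj_append_tensor_idx:
  "inj_on (\<lambda>(a,b). a @ b) (tensor_idx q n \<times> tensor_idx p n)"
  by (auto simp: inj_on_def tensor_idx_def)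

lemma sum_concat:
  "(\<Sum>xs\<in>tensor_idx (p*q) n. \<Prod>j<p. f j (take q (drop (j*q) xs)))
   = (\<Prod>j<p. \<Sum>\<alpha>\<in>tensor_idx q n. (f j \<alpha> :: real))"
proof (induction p arbitrary: f)
  case 0
  then show ?case by simp
next
  case (Suc p)
  have "(\<Sum>xs\<in>tensor_idx (Suc p*q) n. \<Prod>j<Suc p. f j (take q (drop (j*q) xs)))
      = (\<Sum>(a,b)\<in>tensor_idx q n \<times> tensor_idx (p*q) n.
            \<Prod>j<Suc p. f j (take q (drop (j*q) (a@b))))"
  proof -
    have e: "tensor_idx (Suc p*q) n = (\<lambda>(a,b). a @ b) ` (tensor_idx q n \<times> tensor_idx (p*q) n)"
      using tensor_idx_add[of q "p*q" n] by simp
    show ?thesis unfolding e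
      by (subst sum.reindex[OF inj_append_tensor_idx]) (simp add: case_prod_unfold comp_def)
  qed
  also have "\<dots> = (\<Sum>(a,b)\<in>tensor_idx q n \<times> tensor_idx (p*q) n.
            f 0 a * (\<Prod>j<p. f (Suc j) (take q (drop (j*q) b))))"
  proof (rule sum.cong[OF refl], clarify)
    fix a b assume ab: "a \<in> tensor_idx q n" "b \<in> tensor_idx (p*q) n"
    then have la: "length a = q" by (simp add: tensor_idx_def)
    show "(\<Prod>j<Suc p. f j (take q (drop (j*q) (a@b)))) =
          f 0 a * (\<Prod>j<p. f (Suc j) (take q (drop (j*q) b)))"
      unfolding prod.lessThan_Suc_shift using la by simp
  qed
  also have "\<dots> = (\<Sum>a\<in>tensor_idx q n. f 0 a) *
      (\<Sum>b\<in>tensor_idx (p*q) n. \<Prod>j<p. f (Suc j) (take q (drop (j*q) b)))"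
    by (simp add: sum_product sum.cartesian_product)
  also have "\<dots> = (\<Sum>a\<in>tensor_idx q n. f 0 a) * (\<Prod>j<p. \<Sum>\<alpha>\<in>tensor_idx q n. f (Suc j) \<alpha>)"
    using Suc.IH[of "\<lambda>j. f (Suc j)"] by simp
  also have "\<dots> = (\<Prod>j<Suc p. \<Sum>\<alpha>\<in>tensor_idx q n. f j \<alpha>)"
    unfolding prod.lessThan_Suc_shift by simp
  finally show ?case .
qed

definition Nf :: "nat \<Rightarrow> nat \<Rightarrow> (nat list \<Rightarrow> real) \<Rightarrow> (nat \<Rightarrow> real) \<Rightarrow> nat \<Rightarrow> real" where
  "Nf m n A x i = (\<Sum>is\<in>tensor_idx (m - 1) n. A (i # is) * (\<Prod>j<m - 1. x (is ! j)))"

lemma take_drop_tensor_idx: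
  assumes "\<alpha> \<in> tensor_idx (p * q) n" "j < p"
  shows "take q (drop (j * q) \<alpha>) \<in> tensor_idx q n"
proof -
  have l: "length \<alpha> = p * q" using assms by (simp add: tensor_idx_def)
  have "j * q + q \<le> p * q" using assms(2)
    using mult_le_mono1[of "Suc j" p q] by simp
  then have "length (take q (drop (j * q) \<alpha>)) = q" using l by simp
  moreover have "set (take q (drop (j * q) \<alpha>)) \<subseteq> {..<n}"
  proof -
    have "set \<alpha> \<subseteq> {..<n}" using assms(1) by (simp add: tensor_idx_def)
    then show ?thesis by (meson order_trans set_take_subset set_drop_subset)
  qed
  ultimately show ?thesis by (simp add: tensor_idx_def)
qed

lemma row_sum_nonneg_eq:
  assumes "k \<ge> 1" "nonneg_tensor k n B" "l < n"
  shows "row_sum k n B l = (\<Sum>\<beta>\<in>tensor_idx (k-1) n. B (l # \<beta>))"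
proof -
  have "\<And>\<beta>. \<beta> \<in> tensor_idx (k-1) n \<Longrightarrow> B (l # \<beta>) \<ge> 0"
    using assms tensor_idx_Cons[of l n _ "k-1"] by (auto simp: nonneg_tensor_def)
  then show ?thesis unfolding row_sum_def by (intro sum.cong) auto
qed

lemma row_sum_nonneg: "row_sum k n B l \<ge> 0"
  unfolding row_sum_def by (intro sum_nonneg) auto

lemma row_sum_prod:
  assumes "m \<ge> 1" "k \<ge> 1" "nonneg_tensor m n A" "nonneg_tensor k n B" "i < n"
  shows "row_sum ((m-1)*(k-1)+1) n (tensor_prod m k n A B) i = Nf m n A (row_sum k n B) i"
proof -
  let ?T = "\<lambda>\<alpha> js. A (i # js) * (\<Prod>j<m - 1. B (js ! j # take (k - 1) (drop (j * (k - 1)) \<alpha>)))"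
  have nn: "?T \<alpha> js \<ge> 0" if "\<alpha> \<in> tensor_idx ((m-1)*(k-1)) n" "js \<in> tensor_idx (m-1) n" for \<alpha> js
  proof -
    have "A (i # js) \<ge> 0" using assms that tensor_idx_Cons[of i n "js" "m-1"]
      by (auto simp: nonneg_tensor_def)
    moreover have "B (js ! j # take (k - 1) (drop (j * (k - 1)) \<alpha>)) \<ge> 0" if "j < m - 1" for j
    proof -
      have "js ! j # take (k - 1) (drop (j * (k - 1)) \<alpha>) \<in> tensor_idx (Suc (k-1)) n"
        by (intro tensor_idx_Cons tensor_idx_nth take_drop_tensor_idx) (use that \<open>js \<in> _\<close> \<open>\<alpha> \<in> _\<close> in auto)
      then show ?thesis using assms by (auto simp: nonneg_tensor_def)
    qed
    ultimately show ?thesis by (intro mult_nonneg_nonneg prod_nonneg) auto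
  qed
  have "row_sum ((m-1)*(k-1)+1) n (tensor_prod m k n A B) i
      = (\<Sum>\<alpha>\<in>tensor_idx ((m-1)*(k-1)) n. \<Sum>js\<in>tensor_idx (m - 1) n. ?T \<alpha> js)"
    unfolding row_sum_def
  proof (rule sum.cong)
    fix \<alpha> assume a: "\<alpha> \<in> tensor_idx ((m-1)*(k-1)) n"
    have "(\<Sum>js\<in>tensor_idx (m - 1) n. ?T \<alpha> js) \<ge> 0" using nn[OF a] by (intro sum_nonneg) auto
    then show "\<bar>tensor_prod m k n A B (i # \<alpha>)\<bar> = (\<Sum>js\<in>tensor_idx (m - 1) n. ?T \<alpha> js)"
      unfolding tensor_prod_def by simp
  qed simp
  also have "\<dots> = (\<Sum>js\<in>tensor_idx (m - 1) n. \<Sum>\<alpha>\<in>tensor_idx ((m-1)*(k-1)) n. ?T \<alpha> js)"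
    by (rule sum.swap)
  also have "\<dots> = (\<Sum>js\<in>tensor_idx (m - 1) n. A (i # js) *
        (\<Prod>j<m - 1. \<Sum>\<beta>\<in>tensor_idx (k-1) n. B (js ! j # \<beta>)))"
  proof (intro sum.cong refl)
    fix js
    show "(\<Sum>\<alpha>\<in>tensor_idx ((m-1)*(k-1)) n. ?T \<alpha> js) = A (i # js) *
        (\<Prod>j<m - 1. \<Sum>\<beta>\<in>tensor_idx (k-1) n. B (js ! j # \<beta>))"
    proof -
      have e: "(\<Sum>\<alpha>\<in>tensor_idx ((m-1)*(k-1)) n. \<Prod>j<m - 1. B (js ! j # take (k - 1) (drop (j * (k - 1)) \<alpha>)))
          = (\<Prod>j<m - 1. \<Sum>\<beta>\<in>tensor_idx (k-1) n. B (js ! j # \<beta>))"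
        by (rule sum_concat)
      have "(\<Sum>\<alpha>\<in>tensor_idx ((m-1)*(k-1)) n. ?T \<alpha> js) = A (i # js) *
         (\<Sum>\<alpha>\<in>tensor_idx ((m-1)*(k-1)) n. \<Prod>j<m - 1. B (js ! j # take (k - 1) (drop (j * (k - 1)) \<alpha>)))"
        by (simp only: sum_distrib_left)
      then show ?thesis by (simp only: e)
    qed
  qed
  also have "\<dots> = Nf m n A (row_sum k n B) i"
    unfolding Nf_def
  proof (rule sum.cong[OF refl])
    fix js assume js: "js \<in> tensor_idx (m - 1) n"
    have "(\<Prod>j<m - 1. \<Sum>\<beta>\<in>tensor_idx (k-1) n. B (js ! j # \<beta>)) = (\<Prod>j<m - 1. row_sum k n B (js ! j))"
      by (rule prod.cong[OF refl]) (simp add: row_sum_nonneg_eq[OF assms(2,4)] tensor_idx_nth[OF js])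
    then show "A (i # js) * (\<Prod>j<m - 1. \<Sum>\<beta>\<in>tensor_idx (k-1) n. B (js ! j # \<beta>)) =
        A (i # js) * (\<Prod>j<m - 1. row_sum k n B (js ! j))" by simp
  qed
  finally show ?thesis .
qed

lemma A_nonneg: "nonneg_tensor m n A \<Longrightarrow> m \<ge> 1 \<Longrightarrow> i < n \<Longrightarrow> js \<in> tensor_idx (m-1) n \<Longrightarrow> A (i # js) \<ge> 0"
  using tensor_idx_Cons[of i n js "m-1"] by (auto simp: nonneg_tensor_def)

lemma Nf_cong: "(\<And>i. i < n \<Longrightarrow> x i = y i) \<Longrightarrow> Nf m n A x i = Nf m n A y i"
  unfolding Nf_def
  by (rule sum.cong[OF refl], rule arg_cong[where f="\<lambda>z. _ * z"], rule prod.cong[OF refl]) (auto simp: tensor_idx_nth)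

lemma Nf_nonneg:
  assumes "nonneg_tensor m n A" "m \<ge> 1" "i < n" "\<And>l. l < n \<Longrightarrow> x l \<ge> 0"
  shows "Nf m n A x i \<ge> 0"
  unfolding Nf_def
proof (rule sum_nonneg)
  fix js assume js: "js \<in> tensor_idx (m - 1) n"
  have "A (i # js) \<ge> 0" using A_nonneg assms js by auto
  moreover have "(\<Prod>j<m - 1. x (js ! j)) \<ge> 0"
    by (rule prod_nonneg) (use assms tensor_idx_nth[OF js] in auto)
  ultimately show "A (i # js) * (\<Prod>j<m - 1. x (js ! j)) \<ge> 0" by simp
qed

lemma Nf_mono:
  assumes "nonneg_tensor m n A" "m \<ge> 1" "i < n" "\<And>l. l < n \<Longrightarrow> 0 \<le> x l" "\<And>l. l < n \<Longrightarrow> x l \<le> y l"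
  shows "Nf m n A x i \<le> Nf m n A y i"
  unfolding Nf_def
proof (rule sum_mono)
  fix js assume js: "js \<in> tensor_idx (m - 1) n"
  have "A (i # js) \<ge> 0" using A_nonneg assms js by auto
  moreover have "(\<Prod>j<m - 1. x (js ! j)) \<le> (\<Prod>j<m - 1. y (js ! j))"
    by (rule prod_mono) (use assms tensor_idx_nth[OF js] in auto)
  ultimately show "A (i # js) * (\<Prod>j<m - 1. x (js ! j)) \<le> A (i # js) * (\<Prod>j<m - 1. y (js ! j))"
    by (rule mult_left_mono[rotated])
qed

lemma Nf_hom: "Nf m n A (\<lambda>l. c * x l) i = c ^ (m - 1) * Nf m n A x i"
proof -
  have "\<And>js. (\<Prod>j<m - 1. c * x (js ! j)) = c ^ (m - 1) * (\<Prod>j<m - 1. x (js ! j))"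
    by (simp add: prod.distrib)
  then show ?thesis unfolding Nf_def by (simp add: sum_distrib_left mult.left_commute)
qed

lemma Nf_strict:
  assumes "nonneg_tensor m n A" "m \<ge> 1" "i < n" "\<And>l. l < n \<Longrightarrow> 0 \<le> x l" "\<And>l. l < n \<Longrightarrow> x l \<le> y l"
    and "js \<in> tensor_idx (m-1) n" "A (i # js) > 0" "(\<Prod>j<m - 1. x (js ! j)) < (\<Prod>j<m - 1. y (js ! j))"
  shows "Nf m n A x i < Nf m n A y i"
  unfolding Nf_def
proof (rule sum_strict_mono_ex1)
  show "\<forall>z\<in>tensor_idx (m - 1) n. A (i # z) * (\<Prod>j<m - 1. x (z ! j)) \<le> A (i # z) * (\<Prod>j<m - 1. y (z ! j))"
  proof
    fix z assume z: "z \<in> tensor_idx (m - 1) n"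
    have "A (i # z) \<ge> 0" using A_nonneg assms z by auto
    moreover have "(\<Prod>j<m - 1. x (z ! j)) \<le> (\<Prod>j<m - 1. y (z ! j))"
      by (rule prod_mono) (use assms tensor_idx_nth[OF z] in auto)
    ultimately show "A (i # z) * (\<Prod>j<m - 1. x (z ! j)) \<le> A (i # z) * (\<Prod>j<m - 1. y (z ! j))"
      by (rule mult_left_mono[rotated])
  qed
  show "\<exists>a\<in>tensor_idx (m - 1) n. A (i # a) * (\<Prod>j<m - 1. x (a ! j)) < A (i # a) * (\<Prod>j<m - 1. y (a ! j))"
    using assms by (intro bexI[of _ js]) auto
qed simp

lemma exists_mu:
  fixes a b :: "nat \<Rightarrow> real"
  assumes "finite I" "\<And>i. i \<in> I \<Longrightarrow> a i < b i"
  shows "\<exists>\<mu>>1. \<forall>i\<in>I. \<mu> ^ p * a i < b i"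
proof -
  have "\<forall>\<^sub>F \<mu> in at_right 1. \<forall>i\<in>I. \<mu> ^ p * a i < b i"
  proof (rule eventually_ball_finite[OF assms(1)], intro ballI)
    fix i assume "i \<in> I"
    have "((\<lambda>\<mu>::real. \<mu> ^ p * a i) \<longlongrightarrow> 1 ^ p * a i) (at_right 1)"
      by (intro tendsto_intros)
    then show "\<forall>\<^sub>F \<mu> in at_right 1. \<mu> ^ p * a i < b i"
      using assms(2)[OF \<open>i \<in> I\<close>] by (auto dest: order_tendstoD)
  qed
  moreover have "\<forall>\<^sub>F \<mu> in at_right (1::real). \<mu> > 1"
    by (simp add: eventually_at_right_less)
  ultimately have "\<forall>\<^sub>F \<mu> in at_right (1::real). \<mu> > 1 \<and> (\<forall>i\<in>I. \<mu> ^ p * a i < b i)"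
    by eventually_elim auto
  then obtain \<mu> where "\<mu> > 1 \<and> (\<forall>i\<in>I. \<mu> ^ p * a i < b i)"
    using eventually_happens[of _ "at_right (1::real)"] by auto
  then show ?thesis by auto
qed

lemma improve:
  assumes m2: "m \<ge> 2" and nnA: "nonneg_tensor m n A" and wi: "weakly_irreducible m n A"
  shows "\<forall>x. card {i. i < n \<and> Nf m n A x i = s * x i ^ (m-1)} = c \<longrightarrow> (\<forall>i<n. x i > 0) \<longrightarrow>
     (\<forall>i<n. Nf m n A x i \<le> s * x i ^ (m-1)) \<longrightarrow> (\<exists>i<n. Nf m n A x i < s * x i ^ (m-1)) \<longrightarrow>
     (\<exists>y. (\<forall>i<n. y i > 0) \<and> (\<forall>i<n. Nf m n A y i < s * y i ^ (m-1)))"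
proof (induction c rule: less_induct)
  case (less c)
  show ?case
  proof (intro allI impI)
    fix x assume c: "card {i. i < n \<and> Nf m n A x i = s * x i ^ (m-1)} = c"
      and pos: "\<forall>i<n. x i > 0" and le: "\<forall>i<n. Nf m n A x i \<le> s * x i ^ (m-1)"
      and ex: "\<exists>i<n. Nf m n A x i < s * x i ^ (m-1)"
    define J where "J = {i. i < n \<and> Nf m n A x i = s * x i ^ (m-1)}"
    show "\<exists>y. (\<forall>i<n. y i > 0) \<and> (\<forall>i<n. Nf m n A y i < s * y i ^ (m-1))"
    proof (cases "J = {}")
      case True
      have "\<forall>i<n. Nf m n A x i < s * x i ^ (m-1)"
      proof (intro allI impI)
        fix i assume "i < n"
        then have "Nf m n A x i \<noteq> s * x i ^ (m-1)" using True unfolding J_def by blast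
        then show "Nf m n A x i < s * x i ^ (m-1)" using le \<open>i < n\<close> by (simp add: order_less_le)
      qed
      then show ?thesis using pos by blast
    next
      case False
      obtain i2 where i2: "i2 < n" "Nf m n A x i2 < s * x i2 ^ (m-1)" using ex by blast
      have "J \<subseteq> {..<n}" unfolding J_def by auto
      moreover have "i2 \<notin> J" using i2 unfolding J_def by auto
      ultimately have Jsub: "J \<subset> {..<n}" using i2(1) by blast
      have "\<exists>i\<in>J. \<exists>js\<in>tensor_idx (m-1) n. set js \<subseteq> {..<n} - J \<and> 0 < A (i # js)"
        using wi[unfolded weakly_irreducible_def, rule_format, OF conjI[OF False Jsub]] .
      then obtain i0 js where i0: "i0 \<in> J" and js: "js \<in> tensor_idx (m-1) n" "set js \<subseteq> {..<n} - J"
        and Apos: "A (i0 # js) > 0"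
        by blast
      have "\<exists>\<mu>>1. \<forall>i\<in>{..<n} - J. \<mu> ^ (m-1) * Nf m n A x i < s * x i ^ (m-1)"
      proof (rule exists_mu)
        fix i assume "i \<in> {..<n} - J"
        then have "i < n" "Nf m n A x i \<noteq> s * x i ^ (m-1)" unfolding J_def by auto
        then show "Nf m n A x i < s * x i ^ (m-1)" using le by (simp add: order_less_le)
      qed simp
      then obtain \<mu> where mu1: "\<mu> > 1" and mu: "\<And>i. i < n \<Longrightarrow> i \<notin> J \<Longrightarrow> \<mu> ^ (m-1) * Nf m n A x i < s * x i ^ (m-1)"
        by auto
      define y where "y = (\<lambda>i. if i \<in> J then \<mu> * x i else x i)"
      have x0: "\<And>l. l < n \<Longrightarrow> 0 \<le> x l" using pos by (simp add: less_imp_le)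
      have xy: "\<And>l. l < n \<Longrightarrow> x l \<le> y l" using pos mu1 by (simp add: y_def)
      have y0: "\<And>l. l < n \<Longrightarrow> 0 \<le> y l" using x0 xy order_trans by blast
      have ymu: "\<And>l. l < n \<Longrightarrow> y l \<le> \<mu> * x l" using pos mu1 by (simp add: y_def)
      have ypos: "\<forall>i<n. y i > 0" using pos mu1 by (simp add: y_def)
      have Nfy: "Nf m n A y i \<le> \<mu> ^ (m-1) * Nf m n A x i" if "i < n" for i
      proof -
        have "Nf m n A y i \<le> Nf m n A (\<lambda>l. \<mu> * x l) i"
          by (rule Nf_mono[OF nnA]) (use m2 that y0 ymu in auto)
        then show ?thesis using Nf_hom[of m n A \<mu> x i] by simp
      qed
      have yle: "Nf m n A y i \<le> s * y i ^ (m-1)" if "i < n" for i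
      proof (cases "i \<in> J")
        case True
        then have "\<mu> ^ (m-1) * Nf m n A x i = s * y i ^ (m-1)"
          by (simp add: J_def y_def power_mult_distrib)
        then show ?thesis using Nfy[OF that] by simp
      next
        case False
        then show ?thesis using Nfy[OF that] mu[OF that False] by (simp add: y_def)
      qed
      have i0n: "i0 < n" using i0 J_def by simp
      have yi0: "Nf m n A y i0 < s * y i0 ^ (m-1)"
      proof -
        have jsn: "js ! j < n \<and> js ! j \<notin> J" if "j < m - 1" for j
        proof -
          have "js ! j \<in> set js" using js(1) that by (simp add: tensor_idx_def)
          then show ?thesis using js(2) by auto
        qed
        have "(\<Prod>j<m - 1. y (js ! j)) = (\<Prod>j<m - 1. x (js ! j))"
          using jsn by (intro prod.cong) (auto simp: y_def)
        also have "\<dots> < \<mu> ^ (m-1) * (\<Prod>j<m - 1. x (js ! j))"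
        proof -
          have "(\<Prod>j<m - 1. x (js ! j)) > 0" using jsn pos by (intro prod_pos) auto
          moreover have "\<mu> ^ (m-1) > 1" using mu1 m2 by (intro one_less_power) auto
          ultimately show ?thesis by simp
        qed
        also have "\<dots> = (\<Prod>j<m - 1. \<mu> * x (js ! j))" by (simp add: prod.distrib)
        finally have "Nf m n A y i0 < Nf m n A (\<lambda>l. \<mu> * x l) i0"
          using Nf_strict[OF nnA _ i0n y0 ymu js(1) Apos] m2 by simp
        also have "\<dots> = \<mu> ^ (m-1) * Nf m n A x i0" by (rule Nf_hom)
        also have "\<dots> = s * y i0 ^ (m-1)"
          using i0 by (simp add: J_def y_def power_mult_distrib)
        finally show ?thesis .
      qed
      define J' where "J' = {i. i < n \<and> Nf m n A y i = s * y i ^ (m-1)}"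
      have "J' \<subseteq> J - {i0}"
      proof
        fix i assume "i \<in> J'"
        then have i: "i < n" "Nf m n A y i = s * y i ^ (m-1)" by (auto simp: J'_def)
        show "i \<in> J - {i0}"
        proof (rule ccontr)
          assume "i \<notin> J - {i0}"
          then consider "i = i0" | "i \<notin> J" by blast
          then show False
          proof cases
            case 1 then show ?thesis using i yi0 by simp
          next
            case 2 then show ?thesis using Nfy[OF i(1)] mu[OF i(1) 2] i by (simp add: y_def)
          qed
        qed
      qed
      moreover have "finite J" unfolding J_def by simp
      ultimately have "card J' < card J"
      proof -
        have "J - {i0} \<subset> J" using i0 by auto
        then have "card (J - {i0}) < card J" using \<open>finite J\<close> by (rule psubset_card_mono[rotated])
        moreover have "card J' \<le> card (J - {i0})"
          using \<open>J' \<subseteq> J - {i0}\<close> \<open>finite J\<close> by (intro card_mono) auto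
        ultimately show ?thesis by linarith
      qed
      then have "card J' < c" using c J_def by simp
      from less.IH[OF this, rule_format, of y] show ?thesis
        using ypos yle yi0 i0n unfolding J'_def by blast
    qed
  qed
qed

lemma lower_bound:
  assumes m2: "m \<ge> 2" and nnA: "nonneg_tensor m n A" and wi: "weakly_irreducible m n A"
    and cpos: "c > 0" and cA: "\<And>i js. i < n \<Longrightarrow> js \<in> tensor_idx (m-1) n \<Longrightarrow> A (i # js) > 0 \<Longrightarrow> c \<le> A (i # js)"
    and Cpos: "C > 0" and th0: "\<theta> > 0" and th1: "\<theta> \<le> 1" and thc: "\<theta> ^ (m-1) \<le> c / C"
    and xpos: "\<And>i. i < n \<Longrightarrow> 0 < x i" and i1: "i1 < n" "x i1 = 1"
    and xC: "\<And>i. i < n \<Longrightarrow> Nf m n A x i \<le> C * x i ^ (m-1)"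
  shows "\<And>i. i < n \<Longrightarrow> \<theta> ^ (n-1) \<le> x i"
proof -
  have claim: "t < n \<longrightarrow> (\<exists>S\<subseteq>{..<n}. card S = Suc t \<and> (\<forall>j\<in>S. \<theta> ^ t \<le> x j))" for t
  proof (induction t)
    case 0
    show ?case using i1 by (intro impI exI[of _ "{i1}"]) auto
  next
    case (Suc t)
    show ?case
    proof
      assume St: "Suc t < n"
      then obtain S where S: "S \<subseteq> {..<n}" "card S = Suc t" "\<forall>j\<in>S. \<theta> ^ t \<le> x j"
        using Suc.IH by auto
      define I where "I = {..<n} - S"
      have finS: "finite S" using S(1) finite_subset by blast
      have Ine: "I \<noteq> {}"
      proof
        assume "I = {}"
        then have "{..<n} \<subseteq> S" unfolding I_def by auto
        then have "card {..<n} \<le> card S" using card_mono[OF finS] by blast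
        then show False using S(2) St by simp
      qed
      obtain s0 where s0: "s0 \<in> S" using S(2) card_gt_0_iff[of S] by fastforce
      have Isub: "I \<subset> {..<n}" using s0 S(1) unfolding I_def by auto
      have "\<exists>i\<in>I. \<exists>js\<in>tensor_idx (m-1) n. set js \<subseteq> {..<n} - I \<and> 0 < A (i # js)"
        using wi Ine Isub unfolding weakly_irreducible_def by blast
      then obtain i js where i: "i \<in> I" and js: "js \<in> tensor_idx (m-1) n" "set js \<subseteq> {..<n} - I"
        and Apos: "A (i # js) > 0"
        by blast
      have iS: "i < n" "i \<notin> S" using i I_def by auto
      have jsS: "js ! j \<in> S" if "j < m - 1" for j
      proof -
        have "js ! j \<in> set js" using js(1) that by (simp add: tensor_idx_def)
        then show ?thesis using js(2) S(1) unfolding I_def by auto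
      qed
      have x0: "\<And>l. l < n \<Longrightarrow> 0 \<le> x l" using xpos less_imp_le by blast
      have "c * (\<theta> ^ t) ^ (m-1) \<le> A (i # js) * (\<Prod>j<m - 1. x (js ! j))"
      proof (rule mult_mono)
        show "c \<le> A (i # js)" using cA[OF iS(1) js(1) Apos] .
        have "(\<Prod>j<m - 1. \<theta> ^ t) \<le> (\<Prod>j<m - 1. x (js ! j))"
          using jsS S(3) th0 by (intro prod_mono) auto
        then show "(\<theta> ^ t) ^ (m-1) \<le> (\<Prod>j<m - 1. x (js ! j))" by simp
        show "0 \<le> A (i # js)" using Apos by simp
        show "0 \<le> (\<theta> ^ t) ^ (m-1)" using th0 by simp
      qed
      also have "\<dots> \<le> Nf m n A x i"
        unfolding Nf_def
      proof (rule member_le_sum[OF js(1)])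
        fix js' assume "js' \<in> tensor_idx (m-1) n - {js}"
        then show "0 \<le> A (i # js') * (\<Prod>j<m - 1. x (js' ! j))"
          using A_nonneg[OF nnA _ iS(1)] m2 x0 tensor_idx_nth
          by (intro mult_nonneg_nonneg prod_nonneg) auto
      qed simp
      also have "\<dots> \<le> C * x i ^ (m-1)" using xC iS by simp
      finally have "c * (\<theta> ^ t) ^ (m-1) \<le> C * x i ^ (m-1)" .
      then have "(c / C) * (\<theta> ^ t) ^ (m-1) \<le> x i ^ (m-1)"
        using Cpos by (simp add: field_simps)
      moreover have "\<theta> ^ (m-1) * (\<theta> ^ t) ^ (m-1) \<le> (c / C) * (\<theta> ^ t) ^ (m-1)"
        using thc th0 by (intro mult_right_mono) auto
      ultimately have "\<theta> ^ (m-1) * (\<theta> ^ t) ^ (m-1) \<le> x i ^ (m-1)" by linarith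
      moreover have "\<theta> ^ (m-1) * (\<theta> ^ t) ^ (m-1) = (\<theta> ^ Suc t) ^ (m-1)"
        by (simp add: power_mult_distrib)
      moreover have "m - 1 = Suc (m-2)" using m2 by simp
      ultimately have "(\<theta> ^ Suc t) ^ Suc (m-2) \<le> x i ^ Suc (m-2)" by metis
      then have xi: "\<theta> ^ Suc t \<le> x i"
        by (rule power_le_imp_le_base) (use x0 iS in auto)
      show "\<exists>S\<subseteq>{..<n}. card S = Suc (Suc t) \<and> (\<forall>j\<in>S. \<theta> ^ Suc t \<le> x j)"
      proof (intro exI[of _ "insert i S"] conjI)
        show "insert i S \<subseteq> {..<n}" using S iS by auto
        show "card (insert i S) = Suc (Suc t)" using S iS finite_subset[OF S(1)] by simp
        have "\<theta> ^ Suc t \<le> \<theta> ^ t" using th0 th1 by (simp add: mult_left_le_one_le)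
        then show "\<forall>j\<in>insert i S. \<theta> ^ Suc t \<le> x j" using S xi by force
      qed
    qed
  qed
  fix i assume "i < n"
  then have "n - 1 < n" by simp
  then obtain S where S: "S \<subseteq> {..<n}" "card S = Suc (n-1)" "\<forall>j\<in>S. \<theta> ^ (n-1) \<le> x j"
    using claim by blast
  have "S = {..<n}" using S \<open>i < n\<close> by (intro card_subset_eq) auto
  then show "\<theta> ^ (n-1) \<le> x i" using S \<open>i < n\<close> by auto
qed

lemma compact_box:
  fixes S :: "nat \<Rightarrow> real set"
  assumes "\<And>i. compact (S i)"
  shows "compact {x::nat\<Rightarrow>real. \<forall>i. x i \<in> S i}"
proof -
  have "compactin (product_topology (\<lambda>_. euclidean) UNIV) (PiE UNIV S)"
    using assms by (simp add: compactin_PiE)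
  moreover have "PiE UNIV S = {x. \<forall>i. x i \<in> S i}" by (auto simp: PiE_def Pi_def)
  ultimately show ?thesis by (metis euclidean_product_topology compactin_euclidean_iff)
qed

lemma continuous_on_coord: "continuous_on K (\<lambda>x::nat\<Rightarrow>real. x i)"
  by (rule continuous_on_subset[OF continuous_on_product_coordinates]) auto

lemma continuous_on_Max_fin:
  fixes f :: "nat \<Rightarrow> (nat \<Rightarrow> real) \<Rightarrow> real"
  assumes "finite I" "I \<noteq> {}" "\<And>i. i \<in> I \<Longrightarrow> continuous_on K (f i)"
  shows "continuous_on K (\<lambda>x. Max ((\<lambda>i. f i x) ` I))"
  using assms
proof (induction I rule: finite_ne_induct)
  case (singleton i)
  then show ?case by simp
next
  case (insert i I)
  have eq: "(\<lambda>x. Max ((\<lambda>i. f i x) ` insert i I)) = (\<lambda>x. max (f i x) (Max ((\<lambda>i. f i x) ` I)))"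
    using insert.hyps by (auto simp: Max_insert)
  have "continuous_on K (\<lambda>x. max (f i x) (Max ((\<lambda>i. f i x) ` I)))"
    using insert by (intro continuous_on_max) auto
  then show ?case unfolding eq .
qed

lemma continuous_on_Nf: "continuous_on K (\<lambda>x. Nf m n A x i)"
  unfolding Nf_def
  by (intro continuous_on_sum continuous_on_mult continuous_on_const continuous_on_prod continuous_on_coord)
lemma lessThan_ne: "1 \<le> (n::nat) \<Longrightarrow> {..<n} \<noteq> {}"
proof -
  assume "1 \<le> n" then have "0 \<in> {..<n}" by simp
  then show ?thesis by blast
qed

lemma perron:
  assumes m2: "m \<ge> 2" and n1: "n \<ge> 1" and nnA: "nonneg_tensor m n A" and wi: "weakly_irreducible m n A"
  shows "\<exists>u lam. (\<forall>i<n. u i > 0) \<and> lam \<ge> 0 \<and> (\<forall>i<n. Nf m n A u i = lam * u i ^ (m-1))"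
proof -
  define P where "P = A ` {xs \<in> tensor_idx m n. A xs > 0}"
  define c where "c = (if P = {} then 1 else Min P)"
  have finP: "finite P" unfolding P_def by simp
  have cpos: "c > 0"
  proof (cases "P = {}")
    case False
    have "Min P \<in> P" using False finP by simp
    then show ?thesis using False unfolding c_def P_def by auto
  qed (simp add: c_def)
  have cA: "c \<le> A (i # js)" if "i < n" "js \<in> tensor_idx (m-1) n" "A (i # js) > 0" for i js
  proof -
    have "i # js \<in> tensor_idx (Suc (m-1)) n" by (rule tensor_idx_Cons[OF that(1,2)])
    then have "i # js \<in> tensor_idx m n" using m2 by simp
    then have inP: "A (i # js) \<in> P" unfolding P_def using that(3) by blast
    then have "P \<noteq> {}" by blast
    then show ?thesis using Min_le[OF finP inP] unfolding c_def by simp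
  qed
  define one :: "nat \<Rightarrow> real" where "one = (\<lambda>i. if i < n then 1 else 0)"
  define R where "R = (\<lambda>x i. Nf m n A x i / x i ^ (m-1))"
  define g where "g = (\<lambda>x. Max ((\<lambda>i. R x i) ` {..<n}))"
  define C where "C = max 1 (g one)"
  have Cpos: "C > 0" unfolding C_def by simp
  define \<theta> where "\<theta> = root (m-1) (min 1 (c / C))"
  have m1: "m - 1 > 0" using m2 by simp
  have mc: "min 1 (c / C) > 0" using cpos Cpos by simp
  have th0: "\<theta> > 0" unfolding \<theta>_def using m1 mc by simp
  have th1: "\<theta> \<le> 1" unfolding \<theta>_def using m1 mc by simp
  have thp: "\<theta> ^ (m-1) = min 1 (c / C)" unfolding \<theta>_def using m1 mc by (simp add: real_root_pow_pos2)
  then have thc: "\<theta> ^ (m-1) \<le> c / C" by simp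
  define \<delta> where "\<delta> = \<theta> ^ (n-1)"
  have d0: "\<delta> > 0" unfolding \<delta>_def using th0 by simp
  have d1: "\<delta> \<le> 1" unfolding \<delta>_def using th0 th1 by (simp add: power_le_one)
  define K where "K = {x::nat\<Rightarrow>real. \<forall>i. x i \<in> (if i < n then {\<delta>..1} else {0})}"
  have compK: "compact K" unfolding K_def by (rule compact_box) auto
  have oneK: "one \<in> K" unfolding K_def one_def using d1 by auto
  have Kpos: "x i \<ge> \<delta>" if "x \<in> K" "i < n" for x i
  proof -
    have "x i \<in> (if i < n then {\<delta>..1} else {0})" using that(1) unfolding K_def by blast
    then show ?thesis using that(2) by simp
  qed
  have contR: "continuous_on K (\<lambda>x. R x i)" if "i < n" for i
    unfolding R_def
  proof (rule continuous_on_divide)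
    show "continuous_on K (\<lambda>x. Nf m n A x i)" by (rule continuous_on_Nf)
    show "continuous_on K (\<lambda>x. x i ^ (m-1))" by (rule continuous_on_power[OF continuous_on_coord])
    show "\<forall>x\<in>K. x i ^ (m-1) \<noteq> 0"
    proof
      fix x assume "x \<in> K"
      then have "x i > 0" using Kpos[of x i] d0 \<open>i < n\<close> by linarith
      then show "x i ^ (m-1) \<noteq> 0" by simp
    qed
  qed
  have contg: "continuous_on K g"
    unfolding g_def
    by (rule continuous_on_Max_fin[of "{..<n}" K "\<lambda>i x. R x i"]) (use contR lessThan_ne[OF n1] in auto)
  obtain xs where xsK: "xs \<in> K" and xsmin: "\<And>y. y \<in> K \<Longrightarrow> g xs \<le> g y"
    using continuous_attains_inf[OF compK _ contg] oneK by blast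
  define s where "s = g xs"
  have xspos: "xs i > 0" if "i < n" for i using Kpos[OF xsK that] d0 by linarith
  have Rle: "R xs i \<le> s" if "i < n" for i
    unfolding s_def g_def using that by (intro Max_ge) auto
  have le: "Nf m n A xs i \<le> s * xs i ^ (m-1)" if "i < n" for i
    using Rle[OF that] xspos[OF that] unfolding R_def by (simp add: divide_le_eq)
  have sC: "s \<le> C" unfolding s_def C_def using xsmin[OF oneK] by simp
  have eq: "\<forall>i<n. Nf m n A xs i = s * xs i ^ (m-1)"
  proof (rule ccontr)
    assume "\<not> ?thesis"
    then have ex: "\<exists>i<n. Nf m n A xs i < s * xs i ^ (m-1)" using le by (meson order_less_le)
    obtain y where ypos: "\<forall>i<n. y i > 0" and ylt: "\<forall>i<n. Nf m n A y i < s * y i ^ (m-1)"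
      using improve[OF m2 nnA wi, rule_format, OF refl] xspos le ex by blast
    define M where "M = Max (y ` {..<n})"
    have finn: "finite (y ` {..<n})" "y ` {..<n} \<noteq> {}" using lessThan_ne[OF n1] by auto
    obtain i1 where i1: "i1 < n" "y i1 = M" using Max_in[OF finn] unfolding M_def by auto
    have Mpos: "M > 0" using i1 ypos by auto
    have yM: "y i \<le> M" if "i < n" for i unfolding M_def using that by (intro Max_ge) auto
    define z where "z = (\<lambda>i. if i < n then y i / M else 0)"
    have zpos: "z i > 0" if "i < n" for i using that ypos Mpos by (simp add: z_def)
    have z1: "z i \<le> 1" if "i < n" for i using that yM Mpos by (simp add: z_def)
    have zi1: "z i1 = 1" using i1 Mpos by (simp add: z_def)
    have zlt: "Nf m n A z i < s * z i ^ (m-1)" if "i < n" for i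
    proof -
      have "Nf m n A z i = Nf m n A (\<lambda>l. (1/M) * y l) i"
        by (rule Nf_cong) (simp add: z_def)
      also have "\<dots> = (1/M) ^ (m-1) * Nf m n A y i" by (rule Nf_hom)
      also have "\<dots> < (1/M) ^ (m-1) * (s * y i ^ (m-1))"
        using ylt that Mpos by (intro mult_strict_left_mono) auto
      also have "\<dots> = s * z i ^ (m-1)" using that by (simp add: z_def power_divide)
      finally show ?thesis .
    qed
    have zC: "Nf m n A z i \<le> C * z i ^ (m-1)" if "i < n" for i
    proof -
      have "s * z i ^ (m-1) \<le> C * z i ^ (m-1)"
        using sC zpos[OF that] by (intro mult_right_mono) auto
      then show ?thesis using zlt[OF that] by linarith
    qed
    have zlb: "\<delta> \<le> z i" if "i < n" for i
      unfolding \<delta>_def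
      by (rule lower_bound[OF m2 nnA wi cpos cA Cpos th0 th1 thc zpos i1(1) zi1 zC that]) auto
    have zK: "z \<in> K" unfolding K_def using zlb z1 by (auto simp: z_def)
    have "g z < s"
      unfolding g_def
    proof (subst Max_less_iff)
      show "\<forall>a\<in>(\<lambda>i. R z i) ` {..<n}. a < s"
      proof
        fix a assume "a \<in> (\<lambda>i. R z i) ` {..<n}"
        then obtain i where i: "i < n" "a = R z i" by auto
        show "a < s" using zlt[OF i(1)] zpos[OF i(1)] i(2) unfolding R_def by (simp add: divide_less_eq)
      qed
    qed (use lessThan_ne[OF n1] in auto)
    then show False using xsmin[OF zK] s_def by simp
  qed
  have "s \<ge> 0"
  proof -
    have "Nf m n A xs 0 \<ge> 0" by (rule Nf_nonneg[OF nnA]) (use m2 n1 xspos in \<open>auto simp: less_imp_le\<close>)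
    then have "s * xs 0 ^ (m-1) \<ge> 0" using eq n1 by simp
    moreover have "xs 0 ^ (m-1) > 0" using xspos n1 by simp
    ultimately show ?thesis by (simp add: zero_le_mult_iff)
  qed
  then show ?thesis using eq xspos by blast
qed

lemma spectral:
  assumes m2: "m \<ge> 2" and n1: "n \<ge> 1" and nnA: "nonneg_tensor m n A"
    and upos: "\<forall>i<n. u i > 0" and lam0: "lam \<ge> 0" and eig: "\<forall>i<n. Nf m n A u i = lam * u i ^ (m-1)"
  shows "spectral_radius m n A = lam"
proof -
  have ev: "tensor_eigenvalue m n A (complex_of_real lam)"
    unfolding tensor_eigenvalue_def
  proof (intro exI[of _ "\<lambda>i. complex_of_real (u i)"] conjI allI impI)
    show "\<exists>i<n. complex_of_real (u i) \<noteq> 0" using upos n1 by (intro exI[of _ 0]) auto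
    fix i assume i: "i < n"
    have "(\<Sum>is\<in>tensor_idx (m - 1) n. complex_of_real (A (i # is)) * (\<Prod>j<m - 1. complex_of_real (u (is ! j))))
        = complex_of_real (Nf m n A u i)" unfolding Nf_def by simp
    also have "\<dots> = complex_of_real lam * complex_of_real (u i) ^ (m - 1)" using eig i by simp
    finally show "(\<Sum>is\<in>tensor_idx (m - 1) n. complex_of_real (A (i # is)) * (\<Prod>j<m - 1. complex_of_real (u (is ! j))))
        = complex_of_real lam * complex_of_real (u i) ^ (m - 1)" .
  qed
  have bound: "cmod l \<le> lam" if evl: "tensor_eigenvalue m n A l" for l
  proof -
    obtain x where xne: "\<exists>i<n. x i \<noteq> 0" and xeq: "\<forall>i<n. (\<Sum>is\<in>tensor_idx (m - 1) n. complex_of_real (A (i # is)) * (\<Prod>j<m - 1. x (is ! j))) = l * x i ^ (m - 1)"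
      using evl unfolding tensor_eigenvalue_def by blast
    define a where "a = (\<lambda>i. cmod (x i))"
    define t where "t = Max ((\<lambda>i. a i / u i) ` {..<n})"
    have fin: "finite ((\<lambda>i. a i / u i) ` {..<n})" "(\<lambda>i. a i / u i) ` {..<n} \<noteq> {}"
      using lessThan_ne[OF n1] by auto
    obtain i1 where i1: "i1 < n" "a i1 / u i1 = t" using Max_in[OF fin] unfolding t_def by auto
    obtain i2 where i2: "i2 < n" "x i2 \<noteq> 0" using xne by blast
    have "t \<ge> a i2 / u i2" unfolding t_def using i2 by (intro Max_ge) auto
    moreover have "a i2 / u i2 > 0" using i2 upos by (simp add: a_def)
    ultimately have tpos: "t > 0" by linarith
    have ai1: "a i1 = t * u i1"
    proof -
      have "u i1 > 0" using upos i1(1) by blast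
      then show ?thesis using i1(2) by (simp add: field_simps)
    qed
    have ai1pos: "a i1 > 0" using ai1 tpos upos i1 by simp
    have alt: "a l \<le> t * u l" if "l < n" for l
    proof -
      have "a l / u l \<le> t" unfolding t_def using that by (intro Max_ge) auto
      then show ?thesis using upos that by (simp add: divide_le_eq mult.commute)
    qed
    have "cmod l * a i1 ^ (m-1) = cmod (l * x i1 ^ (m - 1))" by (simp add: a_def norm_mult norm_power)
    also have "\<dots> = cmod (\<Sum>is\<in>tensor_idx (m - 1) n. complex_of_real (A (i1 # is)) * (\<Prod>j<m - 1. x (is ! j)))"
      using xeq i1 by simp
    also have "\<dots> \<le> (\<Sum>is\<in>tensor_idx (m - 1) n. cmod (complex_of_real (A (i1 # is)) * (\<Prod>j<m - 1. x (is ! j))))"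
      by (rule norm_sum)
    also have "\<dots> = Nf m n A a i1"
      unfolding Nf_def
    proof (rule sum.cong[OF refl])
      fix js assume js: "js \<in> tensor_idx (m - 1) n"
      have "A (i1 # js) \<ge> 0" using A_nonneg[OF nnA _ i1(1) js] m2 by simp
      then show "cmod (complex_of_real (A (i1 # js)) * (\<Prod>j<m - 1. x (js ! j))) = A (i1 # js) * (\<Prod>j<m - 1. a (js ! j))"
        by (simp add: norm_mult a_def prod_norm)
    qed
    also have "\<dots> \<le> Nf m n A (\<lambda>l. t * u l) i1"
      by (rule Nf_mono[OF nnA]) (use m2 i1 alt in \<open>auto simp: a_def\<close>)
    also have "\<dots> = t ^ (m-1) * (lam * u i1 ^ (m-1))" using Nf_hom eig i1 by simp
    also have "\<dots> = lam * a i1 ^ (m-1)" by (simp add: ai1 power_mult_distrib)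
    finally have "cmod l * a i1 ^ (m-1) \<le> lam * a i1 ^ (m-1)" .
    then show ?thesis using ai1pos by simp
  qed
  show ?thesis unfolding spectral_radius_def
  proof (rule cSup_eq_maximum)
    show "lam \<in> {cmod lam |lam. tensor_eigenvalue m n A lam}"
      using ev lam0 by (intro CollectI exI[of _ "complex_of_real lam"]) auto
  qed (use bound in auto)
qed

lemma ratio_eq:
  assumes m2: "m \<ge> 2" and k1: "k \<ge> 1" and nnA: "nonneg_tensor m n A" and B: "nonneg_tensor k n B" and i: "i < n"
  shows "ratio m k n A B i = Nf m n A (row_sum k n B) i / (row_sum k n B i) ^ (m-1)"
  unfolding ratio_def using row_sum_prod[OF _ k1 nnA B i] m2 by simp

lemma CW:
  assumes m2: "m \<ge> 2" and n1: "n \<ge> 1" and nnA: "nonneg_tensor m n A"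
    and upos: "\<forall>i<n. u i > 0" and eig: "\<forall>i<n. Nf m n A u i = lam * u i ^ (m-1)"
    and ypos: "\<forall>i<n. y i > 0"
  shows "Min ((\<lambda>i. Nf m n A y i / y i ^ (m-1)) ` {..<n}) \<le> lam"
    and "lam \<le> Max ((\<lambda>i. Nf m n A y i / y i ^ (m-1)) ` {..<n})"
proof -
  let ?r = "\<lambda>i. Nf m n A y i / y i ^ (m-1)"
  have fin: "finite (?r ` {..<n})" "?r ` {..<n} \<noteq> {}" using lessThan_ne[OF n1] by auto
  have finq: "finite ((\<lambda>i. u i / y i) ` {..<n})" "(\<lambda>i. u i / y i) ` {..<n} \<noteq> {}"
    using lessThan_ne[OF n1] by auto
  have y0: "\<And>l. l < n \<Longrightarrow> 0 \<le> y l" using ypos less_imp_le by blast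
  have u0: "\<And>l. l < n \<Longrightarrow> 0 \<le> u l" using upos less_imp_le by blast
  {
    define s where "s = Max (?r ` {..<n})"
    have sle: "Nf m n A y i \<le> s * y i ^ (m-1)" if "i < n" for i
    proof -
      have "?r i \<le> s" unfolding s_def using that by (intro Max_ge[OF fin(1)]) auto
      moreover have "y i ^ (m-1) > 0" using ypos that by simp
      ultimately show ?thesis by (simp add: divide_le_eq)
    qed
    define t where "t = Max ((\<lambda>i. u i / y i) ` {..<n})"
    obtain i0 where i0: "i0 < n" "u i0 / y i0 = t" using Max_in[OF finq] unfolding t_def by auto
    have yi0: "y i0 > 0" "u i0 > 0" using ypos upos i0 by auto
    have tpos: "t > 0" using i0 yi0 by auto
    have ut: "u i0 = t * y i0" using i0(2) yi0 by (simp add: field_simps)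
    have ule: "u l \<le> t * y l" if "l < n" for l
    proof -
      have "u l / y l \<le> t" unfolding t_def using that by (intro Max_ge[OF finq(1)]) auto
      then show ?thesis using ypos that by (simp add: divide_le_eq mult.commute)
    qed
    have "lam * u i0 ^ (m-1) = Nf m n A u i0" using eig i0 by simp
    also have "\<dots> \<le> Nf m n A (\<lambda>l. t * y l) i0"
      by (rule Nf_mono[OF nnA]) (use m2 i0 ule u0 in auto)
    also have "\<dots> = t ^ (m-1) * Nf m n A y i0" by (rule Nf_hom)
    also have "\<dots> \<le> t ^ (m-1) * (s * y i0 ^ (m-1))"
      using sle[OF i0(1)] tpos by (intro mult_left_mono) auto
    also have "\<dots> = s * u i0 ^ (m-1)" by (simp add: ut power_mult_distrib)
    finally have "lam * u i0 ^ (m-1) \<le> s * u i0 ^ (m-1)" .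
    then show "lam \<le> Max (?r ` {..<n})" using yi0 unfolding s_def by simp
  }
  {
    define s where "s = Min (?r ` {..<n})"
    have sle: "s * y i ^ (m-1) \<le> Nf m n A y i" if "i < n" for i
    proof -
      have "s \<le> ?r i" unfolding s_def using that by (intro Min_le[OF fin(1)]) auto
      moreover have "y i ^ (m-1) > 0" using ypos that by simp
      ultimately show ?thesis by (simp add: le_divide_eq)
    qed
    define t where "t = Min ((\<lambda>i. u i / y i) ` {..<n})"
    obtain i0 where i0: "i0 < n" "u i0 / y i0 = t" using Min_in[OF finq] unfolding t_def by auto
    have yi0: "y i0 > 0" "u i0 > 0" using ypos upos i0 by auto
    have tpos: "t > 0" using i0 yi0 by auto
    have ut: "u i0 = t * y i0" using i0(2) yi0 by (simp add: field_simps)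
    have ule: "t * y l \<le> u l" if "l < n" for l
    proof -
      have "t \<le> u l / y l" unfolding t_def using that by (intro Min_le[OF finq(1)]) auto
      then show ?thesis using ypos that by (simp add: le_divide_eq mult.commute)
    qed
    have "s * u i0 ^ (m-1) = t ^ (m-1) * (s * y i0 ^ (m-1))" by (simp add: ut power_mult_distrib)
    also have "\<dots> \<le> t ^ (m-1) * Nf m n A y i0"
      using sle[OF i0(1)] tpos by (intro mult_left_mono) auto
    also have "\<dots> = Nf m n A (\<lambda>l. t * y l) i0" by (rule Nf_hom[symmetric])
    also have "\<dots> \<le> Nf m n A u i0"
      by (rule Nf_mono[OF nnA]) (use m2 i0 ule y0 tpos in auto)
    also have "\<dots> = lam * u i0 ^ (m-1)" using eig i0 by simp
    finally have "s * u i0 ^ (m-1) \<le> lam * u i0 ^ (m-1)" .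
    then show "Min (?r ` {..<n}) \<le> lam" using yi0 unfolding s_def by simp
  }
qed

theorem theorem3p5:
  fixes m n k :: nat and A :: "nat list \<Rightarrow> real"
  assumes "m \<ge> 2" and "n \<ge> 1" and "k \<ge> 1"
    and "nonneg_tensor m n A" and "weakly_irreducible m n A"
  shows "(\<exists>B\<in>S_set k n. Min (ratio m k n A B ` {..<n}) = spectral_radius m n A)
       \<and> (\<forall>B\<in>S_set k n. Min (ratio m k n A B ` {..<n}) \<le> spectral_radius m n A)
       \<and> (\<exists>B\<in>S_set k n. Max (ratio m k n A B ` {..<n}) = spectral_radius m n A)
       \<and> (\<forall>B\<in>S_set k n. spectral_radius m n A \<le> Max (ratio m k n A B ` {..<n}))"
proof -
  note m2 = assms(1) and n1 = assms(2) and k1 = assms(3) and nnA = assms(4) and wi = assms(5)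
  obtain u lam where upos: "\<forall>i<n. u i > 0" and lam0: "lam \<ge> 0"
    and eig: "\<forall>i<n. Nf m n A u i = lam * u i ^ (m-1)"
    using perron[OF m2 n1 nnA wi] by blast
  have rho: "spectral_radius m n A = lam" by (rule spectral[OF m2 n1 nnA upos lam0 eig])
  have img: "ratio m k n A B ` {..<n} = (\<lambda>i. Nf m n A (row_sum k n B) i / (row_sum k n B i) ^ (m-1)) ` {..<n}"
    if "B \<in> S_set k n" for B
  proof (rule image_cong[OF refl])
    fix i assume "i \<in> {..<n}"
    then show "ratio m k n A B i = Nf m n A (row_sum k n B) i / (row_sum k n B i) ^ (m-1)"
      using ratio_eq[OF m2 k1 nnA] that unfolding S_set_def by auto
  qed
  have rpos: "\<forall>i<n. row_sum k n B i > 0" if "B \<in> S_set k n" for B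
    using that row_sum_nonneg[of k n B] unfolding S_set_def by (auto simp: order_less_le)
  define B0 where "B0 = (\<lambda>xs::nat list. if tl xs = replicate (k-1) 0 then u (hd xs) else 0)"
  have rep: "replicate (k-1) 0 \<in> tensor_idx (k-1) n" using n1 by (auto simp: tensor_idx_def)
  have rsB0: "row_sum k n B0 i = u i" if "i < n" for i
  proof -
    have "row_sum k n B0 i = (\<Sum>\<beta>\<in>tensor_idx (k-1) n. if \<beta> = replicate (k-1) 0 then \<bar>u i\<bar> else 0)"
      unfolding row_sum_def B0_def by (intro sum.cong refl) auto
    also have "\<dots> = \<bar>u i\<bar>" using rep by (simp add: sum.delta')
    also have "\<dots> = u i"
    proof -
      have "u i > 0" using upos that by blast
      then show ?thesis by simp
    qed
    finally show ?thesis .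
  qed
  have B0S: "B0 \<in> S_set k n"
    unfolding S_set_def
  proof (intro CollectI conjI allI impI)
    show "nonneg_tensor k n B0"
      unfolding nonneg_tensor_def
    proof
      fix xs assume xs: "xs \<in> tensor_idx k n"
      then have "xs \<noteq> []" using k1 by (auto simp: tensor_idx_def)
      then have "hd xs \<in> set xs" by simp
      then have "hd xs < n" using xs by (auto simp: tensor_idx_def)
      then show "0 \<le> B0 xs" using upos by (auto simp: B0_def less_imp_le)
    qed
    fix i assume "i < n"
    then have "u i > 0" using upos by blast
    then show "row_sum k n B0 i \<noteq> 0" using rsB0 \<open>i < n\<close> by simp
  qed
  have imgB0: "ratio m k n A B0 ` {..<n} = {lam}"
  proof -
    have "ratio m k n A B0 ` {..<n} = (\<lambda>i. Nf m n A (row_sum k n B0) i / (row_sum k n B0 i) ^ (m-1)) ` {..<n}"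
      by (rule img[OF B0S])
    also have "\<dots> = (\<lambda>i. lam) ` {..<n}"
    proof (rule image_cong[OF refl])
      fix i assume i: "i \<in> {..<n}"
      have "Nf m n A (row_sum k n B0) i = Nf m n A u i" by (rule Nf_cong) (simp add: rsB0)
      then show "Nf m n A (row_sum k n B0) i / (row_sum k n B0 i) ^ (m-1) = lam"
      proof -
        have "u i > 0" using upos i by auto
        then show ?thesis using i eig rsB0 \<open>Nf m n A (row_sum k n B0) i = Nf m n A u i\<close> by simp
      qed
    qed
    also have "\<dots> = {lam}" using lessThan_ne[OF n1] by auto
    finally show ?thesis .
  qed
  show ?thesis
  proof (intro conjI ballI)
    show "\<exists>B\<in>S_set k n. Min (ratio m k n A B ` {..<n}) = spectral_radius m n A"
      using B0S imgB0 rho by (intro bexI[of _ B0]) auto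
    show "\<exists>B\<in>S_set k n. Max (ratio m k n A B ` {..<n}) = spectral_radius m n A"
      using B0S imgB0 rho by (intro bexI[of _ B0]) auto
  next
    fix B assume B: "B \<in> S_set k n"
    show "Min (ratio m k n A B ` {..<n}) \<le> spectral_radius m n A"
      unfolding img[OF B] rho by (rule CW(1)[OF m2 n1 nnA upos eig rpos[OF B]])
  next
    fix B assume B: "B \<in> S_set k n"
    show "spectral_radius m n A \<le> Max (ratio m k n A B ` {..<n})"
      unfolding img[OF B] rho by (rule CW(2)[OF m2 n1 nnA upos eig rpos[OF B]])
  qed
qed

end
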